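(* Let $h$ be an interaction anchored in $X$ and $h'$ an interaction anchored in $X'$. Assume that $\sum_{x\in X}\sum_{x'\in X'}f(1+|x-x'|)<\infty$ for every $f\in\mathcal F$. Then the commutator interaction $[h,h']$ is summable; in fact $\sum_S\|[h,h']_S\|<\infty$.
   Context: $\mathcal A$ is the quasi-local $C^*$-algebra on $\mathbb Z^2$ with on-site $M_d(\mathbb C)$, with local subalgebras $\mathcal A_S$ and $\ell^\infty$ distances and diameters; $|x-x'|$ is the $\ell^\infty$ distance. $\mathcal F$ is the set of strictly positive non-increasing $f:\{1,2,\dots\}\to(0,\infty)$ with $r^pf(r)\to0$ for all $p$. An interaction $h$ assigns $h_S\in\mathcal A_S$ to finite $S$. $\|h\|_f=\sup_x\sum_{S\ni x}\|h_S\|/f(1+\mathrm{diam}S)$, and $\mathcal J$ is the set of interactions with some finite $\|h\|_f$. $h$ is anchored in $X$ if $h\in\mathcal J$ and $h_S=0$ whenever $S\cap X=\emptyset$. The commutator is $[h,h']_S=\sum_{S_1\cup S_2=S,\,S_1\cap S_2\ne\emptyset}[h_{S_1},h'_{S_2}]$. An interaction is summable if $\sum_S h_S$ converges in norm. *)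

theory Defs
  imports "HOL-Analysis.Analysis"
begin

type_synonym site = "int \<times> int"

definition dist_inf :: "site \<Rightarrow> site \<Rightarrow> nat" where
  "dist_inf x y = nat (max \<bar>fst x - fst y\<bar> \<bar>snd x - snd y\<bar>)"

definition diam_inf :: "site set \<Rightarrow> nat" where
  "diam_inf S = (if S = {} then 0 else Max ((\<lambda>(x, y). dist_inf x y) ` (S \<times> S)))"

text \<open>The class F: strictly positive, non-increasing functions on {1,2,...}
  with r^p f(r) -> 0 for every p. (Values at 0 are irrelevant.)\<close>
definition decay_class :: "(nat \<Rightarrow> real) \<Rightarrow> bool" where
  "decay_class f \<longleftrightarrow>
     (\<forall>r\<ge>1. f r > 0) \<and>
     (\<forall>r s. 1 \<le> r \<longrightarrow> r \<le> s \<longrightarrow> f s \<le> f r) \<and>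
     (\<forall>p::nat. ((\<lambda>r. real r ^ p * f r) \<longlonglongrightarrow> 0))"

definition quasi_local :: "(site set \<Rightarrow> 'a::{real_normed_algebra_1,banach} set) \<Rightarrow> bool" where
  "quasi_local A \<longleftrightarrow>
     (\<forall>S. finite S \<longrightarrow>
        0 \<in> A S \<and> 1 \<in> A S \<and> closed (A S) \<and>
        (\<forall>a\<in>A S. \<forall>b\<in>A S. a + b \<in> A S \<and> a * b \<in> A S) \<and>
        (\<forall>c::real. \<forall>a\<in>A S. c *\<^sub>R a \<in> A S)) \<and>
     (\<forall>S T. finite T \<longrightarrow> S \<subseteq> T \<longrightarrow> A S \<subseteq> A T) \<and>
     (\<forall>S T. finite S \<longrightarrow> finite T \<longrightarrow> S \<inter> T = {} \<longrightarrow>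
        (\<forall>a\<in>A S. \<forall>b\<in>A T. a * b = b * a)) \<and>
     closure (\<Union>S\<in>{S. finite S}. A S) = UNIV"

definition is_interaction :: "(site set \<Rightarrow> 'a::{real_normed_algebra_1,banach} set)
    \<Rightarrow> (site set \<Rightarrow> 'a) \<Rightarrow> bool" where
  "is_interaction A h \<longleftrightarrow>
     (\<forall>S. (finite S \<and> S \<noteq> {} \<longrightarrow> h S \<in> A S) \<and> (\<not> (finite S \<and> S \<noteq> {}) \<longrightarrow> h S = 0))"

definition fnorm_finite :: "(nat \<Rightarrow> real) \<Rightarrow> (site set \<Rightarrow> 'a::real_normed_vector) \<Rightarrow> bool" where
  "fnorm_finite f h \<longleftrightarrow>
     (\<forall>x. (\<lambda>S. norm (h S) / f (1 + diam_inf S)) summable_on {S. finite S \<and> x \<in> S}) \<and>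
     bdd_above (range (\<lambda>x. \<Sum>\<^sub>\<infinity>S\<in>{S. finite S \<and> x \<in> S}. norm (h S) / f (1 + diam_inf S)))"

definition in_J :: "(site set \<Rightarrow> 'a::{real_normed_algebra_1,banach} set)
    \<Rightarrow> (site set \<Rightarrow> 'a) \<Rightarrow> bool" where
  "in_J A h \<longleftrightarrow> is_interaction A h \<and> (\<exists>f. decay_class f \<and> fnorm_finite f h)"

definition anchored :: "(site set \<Rightarrow> 'a::{real_normed_algebra_1,banach} set)
    \<Rightarrow> (site set \<Rightarrow> 'a) \<Rightarrow> site set \<Rightarrow> bool" where
  "anchored A h X \<longleftrightarrow> in_J A h \<and> (\<forall>S. S \<inter> X = {} \<longrightarrow> h S = 0)"

definition comm_int :: "(site set \<Rightarrow> 'a::ring) \<Rightarrow> (site set \<Rightarrow> 'a) \<Rightarrow> site set \<Rightarrow> 'a" where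
  "comm_int h h' S =
     (if finite S then
        (\<Sum>p\<in>{(S1, S2). S1 \<subseteq> S \<and> S2 \<subseteq> S \<and> S1 \<union> S2 = S \<and> S1 \<inter> S2 \<noteq> {}}.
            h (fst p) * h' (snd p) - h' (snd p) * h (fst p))
      else 0)"

end

theory Submission
  imports Defs
begin

lemma decay_half:
  assumes "decay_class f"
  shows "decay_class (\<lambda>n. f (1 + n div 2))"
proof -
  have pos: "\<And>r. r \<ge> 1 \<Longrightarrow> f r > 0" and mono: "\<And>r s. 1 \<le> r \<Longrightarrow> r \<le> s \<Longrightarrow> f s \<le> f r"
    and lim: "\<And>p. ((\<lambda>r. real r ^ p * f r) \<longlonglongrightarrow> 0)"
    using assms unfolding decay_class_def by auto
  have "((\<lambda>r. real r ^ p * f (1 + r div 2)) \<longlonglongrightarrow> 0)" for p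
  proof -
    have fl: "filterlim (\<lambda>r::nat. 1 + r div 2) at_top sequentially"
      unfolding filterlim_at_top eventually_sequentially
      by (metis div_le_mono nonzero_mult_div_cancel_left trans_le_add2 zero_neq_numeral)
    have l2: "((\<lambda>r. real (1 + r div 2) ^ p * f (1 + r div 2)) \<longlonglongrightarrow> 0)"
      using filterlim_compose[OF lim fl] by (simp add: o_def)
    have l3: "((\<lambda>r. 2 ^ p * (real (1 + r div 2) ^ p * f (1 + r div 2))) \<longlonglongrightarrow> 0)"
      using tendsto_mult_right_zero[OF l2] by simp
    show ?thesis
    proof (rule tendsto_sandwich[OF _ _ tendsto_const l3])
      show "\<forall>\<^sub>F n in sequentially. 0 \<le> real n ^ p * f (1 + n div 2)"
        proof (intro always_eventually allI)
        fix n :: nat show "0 \<le> real n ^ p * f (1 + n div 2)" using pos[of "1 + n div 2"] by simp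
      qed
      show "\<forall>\<^sub>F n in sequentially. real n ^ p * f (1 + n div 2)
          \<le> 2 ^ p * (real (1 + n div 2) ^ p * f (1 + n div 2))"
      proof (intro always_eventually allI)
        fix n :: nat
        have "n \<le> 2 * (1 + n div 2)" by presburger
        then have "real n \<le> 2 * real (1 + n div 2)" by linarith
        then have "real n ^ p \<le> (2 * real (1 + n div 2)) ^ p" by (intro power_mono) auto
        then have "real n ^ p * f (1 + n div 2) \<le> (2 * real (1 + n div 2)) ^ p * f (1 + n div 2)"
          using pos[of "1 + n div 2"] by (intro mult_right_mono) auto
        then show "real n ^ p * f (1 + n div 2) \<le> 2 ^ p * (real (1 + n div 2) ^ p * f (1 + n div 2))"
          unfolding power_mult_distrib mult.assoc .
      qed
    qed
  qed
  moreover have "\<forall>r\<ge>1. f (1 + r div 2) > 0" using pos by auto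
  moreover have "\<forall>r s. 1 \<le> r \<longrightarrow> r \<le> s \<longrightarrow> f (1 + s div 2) \<le> f (1 + r div 2)"
    using mono by (simp add: div_le_mono)
  ultimately show ?thesis unfolding decay_class_def by auto
qed

lemma decay_add:
  assumes "decay_class f" "decay_class g"
  shows "decay_class (\<lambda>n. f n + g n)"
proof -
  have "((\<lambda>r. real r ^ p * (f r + g r)) \<longlonglongrightarrow> 0)" for p
    using tendsto_add[of "\<lambda>r. real r ^ p * f r" 0 _ "\<lambda>r. real r ^ p * g r" 0] assms
    unfolding decay_class_def by (simp add: distrib_left)
  then show ?thesis using assms unfolding decay_class_def by (auto intro: add_mono add_pos_pos)
qed


lemma dist_tri: "dist_inf x y \<le> dist_inf x z + dist_inf z y"
  unfolding dist_inf_def by (cases x, cases y, cases z) (simp, arith)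

lemma dist_le_diam: "finite S \<Longrightarrow> x \<in> S \<Longrightarrow> z \<in> S \<Longrightarrow> dist_inf x z \<le> diam_inf S"
  unfolding diam_inf_def by (auto intro!: Max_ge)

lemma local_bound:
  assumes "decay_class f" "fnorm_finite f h"
    and M: "\<And>y. infsum (\<lambda>S. norm (h S) / f (1 + diam_inf S)) {S. finite S \<and> y \<in> S} \<le> M"
    and T: "finite T" "T \<subseteq> {S. finite S \<and> x \<in> S}" and d: "\<And>S. S \<in> T \<Longrightarrow> d \<le> diam_inf S"
  shows "(\<Sum>S\<in>T. norm (h S)) \<le> f (1 + d) * M"
proof -
  have pos: "\<And>r. r \<ge> 1 \<Longrightarrow> f r > 0" and mono: "\<And>r s. 1 \<le> r \<Longrightarrow> r \<le> s \<Longrightarrow> f s \<le> f r"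
    using assms(1) unfolding decay_class_def by auto
  have sm: "(\<lambda>S. norm (h S) / f (1 + diam_inf S)) summable_on {S. finite S \<and> x \<in> S}"
    using assms(2) unfolding fnorm_finite_def by blast
  have "(\<Sum>S\<in>T. norm (h S)) \<le> (\<Sum>S\<in>T. f (1 + d) * (norm (h S) / f (1 + diam_inf S)))"
  proof (rule sum_mono)
    fix S assume "S \<in> T"
    have fp: "f (1 + diam_inf S) > 0" using pos by auto
    have "f (1 + diam_inf S) \<le> f (1 + d)" using mono d[OF \<open>S \<in> T\<close>] by auto
    then have "f (1 + diam_inf S) * (norm (h S) / f (1 + diam_inf S)) \<le> f (1 + d) * (norm (h S) / f (1 + diam_inf S))"
      using fp by (intro mult_right_mono) (simp_all add: less_imp_le)
    then show "norm (h S) \<le> f (1 + d) * (norm (h S) / f (1 + diam_inf S))" using fp by simp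
  qed
  also have "\<dots> = f (1 + d) * (\<Sum>S\<in>T. norm (h S) / f (1 + diam_inf S))" by (simp add: sum_distrib_left)
  also have "\<dots> \<le> f (1 + d) * M"
  proof (rule mult_left_mono)
    have "(\<Sum>S\<in>T. norm (h S) / f (1 + diam_inf S)) \<le> infsum (\<lambda>S. norm (h S) / f (1 + diam_inf S)) {S. finite S \<and> x \<in> S}"
      by (intro finite_sum_le_infsum[OF sm T] divide_nonneg_pos) (auto intro!: pos)
    then show "(\<Sum>S\<in>T. norm (h S) / f (1 + diam_inf S)) \<le> M" using M[of x] by linarith
    show "0 \<le> f (1 + d)" using pos[of "1+d"] by simp
  qed
  finally show ?thesis .
qed


lemma M_nonneg:
  assumes "decay_class f"
    and M: "\<And>y. infsum (\<lambda>S. norm (h S) / f (1 + diam_inf S)) {S. finite S \<and> y \<in> S} \<le> M"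
  shows "0 \<le> M"
proof -
  have pos: "\<And>r. r \<ge> 1 \<Longrightarrow> f r > 0" using assms(1) unfolding decay_class_def by auto
  have "0 \<le> infsum (\<lambda>S. norm (h S) / f (1 + diam_inf S)) {S. finite S \<and> y \<in> S}" for y
    by (intro infsum_nonneg divide_nonneg_pos) (auto intro!: pos)
  then show ?thesis using M by (meson order_trans)
qed

lemma prod_sum_bound:
  fixes a b :: "'s \<Rightarrow> real"
  assumes "finite Q" "\<And>u. 0 \<le> a u" "\<And>v. 0 \<le> b v"
  shows "(\<Sum>p\<in>Q. a (fst p) * b (snd p)) \<le> (\<Sum>u\<in>fst ` Q. a u) * (\<Sum>v\<in>snd ` Q. b v)"
proof -
  have "(\<Sum>p\<in>Q. a (fst p) * b (snd p)) \<le> (\<Sum>p\<in>fst ` Q \<times> snd ` Q. a (fst p) * b (snd p))"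
  proof (rule sum_mono2)
    show "Q \<subseteq> fst ` Q \<times> snd ` Q" by force
  qed (use assms in \<open>auto intro: mult_nonneg_nonneg\<close>)
  also have "\<dots> = (\<Sum>u\<in>fst ` Q. a u) * (\<Sum>v\<in>snd ` Q. b v)"
    by (simp add: sum_product sum.cartesian_product case_prod_beta)
  finally show ?thesis .
qed

lemma pair_bound:
  assumes f: "decay_class f" "fnorm_finite f h"
    and M: "\<And>y. infsum (\<lambda>S. norm (h S) / f (1 + diam_inf S)) {S. finite S \<and> y \<in> S} \<le> M"
    and g: "decay_class g" "fnorm_finite g h'"
    and M': "\<And>y. infsum (\<lambda>S. norm (h' S) / g (1 + diam_inf S)) {S. finite S \<and> y \<in> S} \<le> M'"
    and Q: "finite Q"
    and QP: "\<And>p. p \<in> Q \<Longrightarrow> finite (fst p) \<and> finite (snd p) \<and> x \<in> fst p \<and> x' \<in> snd p \<and> fst p \<inter> snd p \<noteq> {}"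
  shows "(\<Sum>p\<in>Q. norm (h (fst p)) * norm (h' (snd p)))
     \<le> M * M' * (f 1 + g 1) * (f (1 + (1 + dist_inf x x') div 2) + g (1 + (1 + dist_inf x x') div 2))"
proof -
  define d where "d = (1 + dist_inf x x') div 2"
  have fpos: "\<And>r. r \<ge> 1 \<Longrightarrow> f r > 0" using f(1) unfolding decay_class_def by auto
  have gpos: "\<And>r. r \<ge> 1 \<Longrightarrow> g r > 0" using g(1) unfolding decay_class_def by auto
  have M0: "0 \<le> M" by (rule M_nonneg[OF f(1) M])
  have M'0: "0 \<le> M'" by (rule M_nonneg[OF g(1) M'])
  have key: "d \<le> diam_inf (fst p) \<or> d \<le> diam_inf (snd p)" if "p \<in> Q" for p
  proof -
    from QP[OF that] obtain z where z: "z \<in> fst p" "z \<in> snd p" by blast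
    have "dist_inf x x' \<le> dist_inf x z + dist_inf z x'" by (rule dist_tri)
    moreover have "dist_inf x z \<le> diam_inf (fst p)" using QP[OF that] z by (intro dist_le_diam) auto
    moreover have "dist_inf z x' \<le> diam_inf (snd p)" using QP[OF that] z by (intro dist_le_diam) auto
    ultimately show ?thesis unfolding d_def by linarith
  qed
  define Q1 where "Q1 = {p\<in>Q. d \<le> diam_inf (fst p)}"
  have Q1Q: "Q1 \<subseteq> Q" and fQ1: "finite Q1" using Q unfolding Q1_def by auto
  have fQ2: "finite (Q - Q1)" using Q by auto
  have d1: "\<And>u. u \<in> fst ` Q1 \<Longrightarrow> d \<le> diam_inf u" unfolding Q1_def by auto
  have d2: "\<And>v. v \<in> snd ` (Q - Q1) \<Longrightarrow> d \<le> diam_inf v" unfolding Q1_def using key by force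
  let ?a = "\<lambda>u. norm (h u)" and ?b = "\<lambda>v. norm (h' v)"
  have s1: "(\<Sum>u\<in>fst ` Q1. ?a u) \<le> f (1 + d) * M"
    using QP Q1Q d1 by (intro local_bound[OF f M, of _ x]) (auto simp: fQ1)
  have s2: "(\<Sum>v\<in>snd ` Q1. ?b v) \<le> g (1 + 0) * M'"
    using QP Q1Q by (intro local_bound[OF g M', of _ x']) (auto simp: fQ1)
  have s3: "(\<Sum>u\<in>fst ` (Q - Q1). ?a u) \<le> f (1 + 0) * M"
    using QP by (intro local_bound[OF f M, of _ x]) (auto simp: fQ2)
  have s4: "(\<Sum>v\<in>snd ` (Q - Q1). ?b v) \<le> g (1 + d) * M'"
    using QP d2 by (intro local_bound[OF g M', of _ x']) (auto simp: fQ2)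
  have "(\<Sum>p\<in>Q. ?a (fst p) * ?b (snd p)) = (\<Sum>p\<in>Q - Q1. ?a (fst p) * ?b (snd p)) + (\<Sum>p\<in>Q1. ?a (fst p) * ?b (snd p))"
    by (rule sum.subset_diff[OF Q1Q Q])
  also have "\<dots> \<le> (f (1 + 0) * M) * (g (1 + d) * M') + (f (1 + d) * M) * (g (1 + 0) * M')"
  proof (rule add_mono)
    show "(\<Sum>p\<in>Q - Q1. ?a (fst p) * ?b (snd p)) \<le> (f (1 + 0) * M) * (g (1 + d) * M')"
      by (rule order_trans[OF prod_sum_bound[OF fQ2 norm_ge_zero norm_ge_zero]]) (rule mult_mono[OF s3 s4], auto intro!: sum_nonneg mult_nonneg_nonneg M0 less_imp_le[OF fpos])
    show "(\<Sum>p\<in>Q1. ?a (fst p) * ?b (snd p)) \<le> (f (1 + d) * M) * (g (1 + 0) * M')"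
      by (rule order_trans[OF prod_sum_bound[OF fQ1 norm_ge_zero norm_ge_zero]]) (rule mult_mono[OF s1 s2], auto intro!: sum_nonneg mult_nonneg_nonneg M0 less_imp_le[OF fpos])
  qed
  also have "\<dots> \<le> M * M' * (f 1 + g 1) * (f (1 + d) + g (1 + d))"
  proof -
    have p: "0 < f 1" "0 < g 1" "0 < f (1 + d)" "0 < g (1 + d)" using fpos gpos by auto
    have "0 \<le> M * M'" using M0 M'0 by simp
    moreover have "f 1 * g (1 + d) + f (1 + d) * g 1 \<le> (f 1 + g 1) * (f (1 + d) + g (1 + d))"
      using p by (simp add: algebra_simps add_nonneg_nonneg less_imp_le)
    ultimately have "M * M' * (f 1 * g (1 + d) + f (1 + d) * g 1) \<le> M * M' * ((f 1 + g 1) * (f (1 + d) + g (1 + d)))"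
      by (intro mult_left_mono)
    then show ?thesis by (simp add: algebra_simps)
  qed
  finally show ?thesis unfolding d_def .
qed


lemma comm_norm_bound:
  fixes h h' :: "site set \<Rightarrow> 'a::real_normed_algebra_1"
  assumes "finite S"
  shows "norm (comm_int h h' S) \<le> (\<Sum>p\<in>{(S1, S2). S1 \<subseteq> S \<and> S2 \<subseteq> S \<and> S1 \<union> S2 = S \<and> S1 \<inter> S2 \<noteq> {}}.
            2 * (norm (h (fst p)) * norm (h' (snd p))))"
proof -
  let ?P = "{(S1, S2). S1 \<subseteq> S \<and> S2 \<subseteq> S \<and> S1 \<union> S2 = S \<and> S1 \<inter> S2 \<noteq> {}}"
  have "norm (comm_int h h' S) = norm (\<Sum>p\<in>?P. h (fst p) * h' (snd p) - h' (snd p) * h (fst p))"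
    using assms unfolding comm_int_def by simp
  also have "\<dots> \<le> (\<Sum>p\<in>?P. norm (h (fst p) * h' (snd p) - h' (snd p) * h (fst p)))"
    by (rule norm_sum)
  also have "\<dots> \<le> (\<Sum>p\<in>?P. 2 * (norm (h (fst p)) * norm (h' (snd p))))"
  proof (rule sum_mono)
    fix p
    have "norm (h (fst p) * h' (snd p) - h' (snd p) * h (fst p)) \<le> norm (h (fst p) * h' (snd p)) + norm (h' (snd p) * h (fst p))"
      by (rule norm_triangle_ineq4)
    also have "\<dots> \<le> norm (h (fst p)) * norm (h' (snd p)) + norm (h' (snd p)) * norm (h (fst p))"
      by (intro add_mono norm_mult_ineq)
    finally show "norm (h (fst p) * h' (snd p) - h' (snd p) * h (fst p)) \<le> 2 * (norm (h (fst p)) * norm (h' (snd p)))"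
      by (simp add: mult.commute)
  qed
  finally show ?thesis .
qed

theorem lemmaA2:
  fixes A :: "site set \<Rightarrow> 'a::{real_normed_algebra_1,banach} set"
    and h h' :: "site set \<Rightarrow> 'a" and X X' :: "site set"
  assumes "quasi_local A"
    and "anchored A h X" and "anchored A h' X'"
    and "\<And>f. decay_class f \<Longrightarrow>
           (\<lambda>(x, x'). f (1 + dist_inf x x')) summable_on (X \<times> X')"
  shows "(\<lambda>S. norm (comm_int h h' S)) summable_on {S. finite S}
       \<and> comm_int h h' summable_on {S. finite S}"
proof -
  have hX: "\<And>S. S \<inter> X = {} \<Longrightarrow> h S = 0" and h'X: "\<And>S. S \<inter> X' = {} \<Longrightarrow> h' S = 0"
    using assms(2,3) unfolding anchored_def by auto
  obtain f where f: "decay_class f" "fnorm_finite f h"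
    using assms(2) unfolding anchored_def in_J_def by auto
  obtain g where g: "decay_class g" "fnorm_finite g h'"
    using assms(3) unfolding anchored_def in_J_def by auto
  obtain M where M: "\<And>y. infsum (\<lambda>S. norm (h S) / f (1 + diam_inf S)) {S. finite S \<and> y \<in> S} \<le> M"
    using f(2) unfolding fnorm_finite_def bdd_above_def by auto
  obtain M' where M': "\<And>y. infsum (\<lambda>S. norm (h' S) / g (1 + diam_inf S)) {S. finite S \<and> y \<in> S} \<le> M'"
    using g(2) unfolding fnorm_finite_def bdd_above_def by auto
  define F where "F = (\<lambda>n. f (1 + n div 2) + g (1 + n div 2))"
  have Fd: "decay_class F" unfolding F_def by (intro decay_add decay_half f g)
  have Fpos: "\<And>r. r \<ge> 1 \<Longrightarrow> F r > 0" using Fd unfolding decay_class_def by auto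
  define \<Phi> where "\<Phi> = (\<lambda>(x, x'). F (1 + dist_inf x x'))"
  have \<Phi>s: "\<Phi> summable_on (X \<times> X')" unfolding \<Phi>_def by (rule assms(4)[OF Fd])
  have \<Phi>pos: "\<And>y. 0 \<le> \<Phi> y" unfolding \<Phi>_def using Fpos by (auto simp: less_imp_le)
  define I where "I = infsum \<Phi> (X \<times> X')"
  define K where "K = M * M' * (f 1 + g 1)"
  have K0: "0 \<le> K"
  proof -
    have "0 < f 1" "0 < g 1" using f(1) g(1) unfolding decay_class_def by auto
    then show ?thesis unfolding K_def using M_nonneg[OF f(1) M] M_nonneg[OF g(1) M'] by simp
  qed
  let ?\<phi> = "\<lambda>p. norm (h (fst p)) * norm (h' (snd p))"
  have Qbound: "(\<Sum>p\<in>Q. ?\<phi> p) \<le> K * I"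
    if Qf: "finite Q" and QP: "\<And>p. p \<in> Q \<Longrightarrow> finite (fst p) \<and> finite (snd p) \<and> fst p \<inter> snd p \<noteq> {}" for Q
  proof -
    define Q' where "Q' = {p\<in>Q. fst p \<inter> X \<noteq> {} \<and> snd p \<inter> X' \<noteq> {}}"
    have Q'f: "finite Q'" using Qf unfolding Q'_def by auto
    have "(\<Sum>p\<in>Q. ?\<phi> p) = (\<Sum>p\<in>Q'. ?\<phi> p)"
      by (rule sum.mono_neutral_right[OF Qf]) (auto simp: Q'_def hX h'X)
    define c where "c = (\<lambda>p::site set \<times> site set. (SOME x. x \<in> fst p \<inter> X, SOME x'. x' \<in> snd p \<inter> X'))"
    have c1: "fst (c p) \<in> fst p \<inter> X" and c2: "snd (c p) \<in> snd p \<inter> X'" if "p \<in> Q'" for p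
    proof -
      have e1: "\<exists>x. x \<in> fst p \<inter> X" and e2: "\<exists>x. x \<in> snd p \<inter> X'" using that unfolding Q'_def by auto
      show "fst (c p) \<in> fst p \<inter> X" unfolding c_def fst_conv by (rule someI_ex[OF e1])
      show "snd (c p) \<in> snd p \<inter> X'" unfolding c_def snd_conv by (rule someI_ex[OF e2])
    qed
    have "(\<Sum>p\<in>Q'. ?\<phi> p) = (\<Sum>y\<in>c ` Q'. \<Sum>p\<in>{p. p \<in> Q' \<and> c p = y}. ?\<phi> p)"
      by (rule sum.image_gen[OF Q'f])
    also have "\<dots> \<le> (\<Sum>y\<in>c ` Q'. K * \<Phi> y)"
    proof (rule sum_mono)
      fix y assume "y \<in> c ` Q'"
      obtain x x' where y: "y = (x, x')" by (rule prod.exhaust)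
      have "(\<Sum>p\<in>{p. p \<in> Q' \<and> c p = y}. ?\<phi> p)
         \<le> M * M' * (f 1 + g 1) * (f (1 + (1 + dist_inf x x') div 2) + g (1 + (1 + dist_inf x x') div 2))"
      proof (rule pair_bound[OF f M g M'])
        show "finite {p. p \<in> Q' \<and> c p = y}" using Q'f by auto
        fix p assume p: "p \<in> {p. p \<in> Q' \<and> c p = y}"
        then have "p \<in> Q" unfolding Q'_def by auto
        then show "finite (fst p) \<and> finite (snd p) \<and> x \<in> fst p \<and> x' \<in> snd p \<and> fst p \<inter> snd p \<noteq> {}"
          using QP c1[of p] c2[of p] p y by auto
      qed
      then show "(\<Sum>p\<in>{p. p \<in> Q' \<and> c p = y}. ?\<phi> p) \<le> K * \<Phi> y"
        unfolding K_def \<Phi>_def F_def y by simp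
    qed
    also have "\<dots> = K * (\<Sum>y\<in>c ` Q'. \<Phi> y)" by (simp add: sum_distrib_left)
    also have "\<dots> \<le> K * I"
    proof (rule mult_left_mono[OF _ K0])
      have "c ` Q' \<subseteq> X \<times> X'"
      proof
        fix y assume "y \<in> c ` Q'"
        then obtain p where "p \<in> Q'" "y = c p" by auto
        then show "y \<in> X \<times> X'" using c1[of p] c2[of p] by (simp add: mem_Times_iff)
      qed
      then show "(\<Sum>y\<in>c ` Q'. \<Phi> y) \<le> I" unfolding I_def
        using \<Phi>pos by (intro finite_sum_le_infsum[OF \<Phi>s]) (auto simp: Q'f)
    qed
    finally show ?thesis using \<open>(\<Sum>p\<in>Q. ?\<phi> p) = (\<Sum>p\<in>Q'. ?\<phi> p)\<close> by simp
  qed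
  define P where "P = (\<lambda>S::site set. {(S1, S2). S1 \<subseteq> S \<and> S2 \<subseteq> S \<and> S1 \<union> S2 = S \<and> S1 \<inter> S2 \<noteq> {}})"
  have Pf: "finite S \<Longrightarrow> finite (P S)" for S
  proof -
    assume "finite S"
    have "P S \<subseteq> Pow S \<times> Pow S" unfolding P_def by auto
    then show ?thesis using \<open>finite S\<close> by (meson finite_Pow_iff finite_SigmaI finite_subset)
  qed
  have bound: "(\<Sum>S\<in>G. norm (comm_int h h' S)) \<le> 2 * (K * I)" if G: "finite G" "G \<subseteq> {S. finite S}" for G
  proof -
    have "(\<Sum>S\<in>G. norm (comm_int h h' S)) \<le> (\<Sum>S\<in>G. \<Sum>p\<in>P S. 2 * ?\<phi> p)"
      using G unfolding P_def by (intro sum_mono comm_norm_bound) auto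
    also have "\<dots> = (\<Sum>p\<in>(\<Union>(P ` G)). 2 * ?\<phi> p)"
    proof (rule sum.UNION_disjoint[symmetric])
      show "finite G" by (rule G(1))
      show "\<forall>i\<in>G. finite (P i)" using G Pf by auto
      show "\<forall>i\<in>G. \<forall>j\<in>G. i \<noteq> j \<longrightarrow> P i \<inter> P j = {}" unfolding P_def by auto
    qed
    also have "\<dots> = 2 * (\<Sum>p\<in>(\<Union>(P ` G)). ?\<phi> p)" by (simp add: sum_distrib_left)
    also have "\<dots> \<le> 2 * (K * I)"
    proof -
      have "(\<Sum>p\<in>(\<Union>(P ` G)). ?\<phi> p) \<le> K * I"
      proof (rule Qbound)
        show "finite (\<Union>(P ` G))" using G Pf by auto
        fix p assume "p \<in> \<Union>(P ` G)"
        then obtain S where "S \<in> G" "p \<in> P S" by auto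
        then show "finite (fst p) \<and> finite (snd p) \<and> fst p \<inter> snd p \<noteq> {}"
          using G unfolding P_def by (auto intro: finite_subset)
      qed
      then show ?thesis by simp
    qed
    finally show ?thesis .
  qed
  have s1: "(\<lambda>S. norm (comm_int h h' S)) summable_on {S. finite S}"
  proof (rule nonneg_bdd_above_summable_on)
    show "bdd_above (sum (\<lambda>S. norm (comm_int h h' S)) ` {F. F \<subseteq> {S. finite S} \<and> finite F})"
      using bound by (intro bdd_aboveI[of _ "2 * (K * I)"]) auto
  qed simp
  moreover have "comm_int h h' summable_on {S. finite S}"
    using s1 by (rule abs_summable_summable)
  ultimately show ?thesis by blast
qed

end
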